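(* Let $n\in\mathbb{N}$ and $c=(c_0,\dots,c_n)\in\mathbb{C}^{n+1}$ with $c_n=1$. Then for every $\omega\in\mathscr{C}^n(\mathbb{R})$ with $D_c(\omega)=0$ and for all $u,v\in\mathbb{R}$, \[ \omega(u+v)=\sum_{j=0}^{n-1}\sum_{i=0}^{n-1-j}c_{i+j+1}\,\omega_c^{(i)}(u)\,\omega^{(j)}(v). \]
   Context: For an open interval $J\subseteq\mathbb{R}$, $\mathscr{C}^n(J)$ denotes the space of $n$ times continuously differentiable complex-valued functions on $J$. For $c=(c_0,\dots,c_n)\in\mathbb{C}^{n+1}$ with $c_n=1$, the differential operator $D_c$ is defined by $D_c(f):=c_nf^{(n)}+\dots+c_1f'+c_0f$ for $f\in\mathscr{C}^n(J)$. The characteristic solution $\omega_c\colon\mathbb{R}\to\mathbb{C}$ is the unique solution of the initial value problem $D_c(\omega_c)=0$, $\omega_c^{(k)}(0)=\delta_{k,n-1}$ for $k\in\{0,\dots,n-1\}$ ($\delta$ is the Kronecker delta). *)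

theory Defs
  imports "HOL-Analysis.Analysis"
begin

definition hderiv :: "nat \<Rightarrow> (real \<Rightarrow> complex) \<Rightarrow> real \<Rightarrow> complex" where
  "hderiv k f = ((\<lambda>g x. vector_derivative g (at x)) ^^ k) f"

definition Cn :: "nat \<Rightarrow> real set \<Rightarrow> (real \<Rightarrow> complex) set" where
  "Cn n J = {f. (\<forall>k<n. \<forall>x\<in>J. (hderiv k f has_vector_derivative hderiv (Suc k) f x) (at x))
               \<and> continuous_on J (hderiv n f)}"

definition Dop :: "nat \<Rightarrow> (nat \<Rightarrow> complex) \<Rightarrow> (real \<Rightarrow> complex) \<Rightarrow> real \<Rightarrow> complex" where
  "Dop n c f = (\<lambda>x. \<Sum>k\<le>n. c k * hderiv k f x)"

definition char_sol :: "nat \<Rightarrow> (nat \<Rightarrow> complex) \<Rightarrow> real \<Rightarrow> complex" where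
  "char_sol n c = (THE w. w \<in> Cn n UNIV \<and> Dop n c w = (\<lambda>_. 0) \<and>
      (\<forall>k<n. hderiv k w 0 = (if k = n - 1 then 1 else 0)))"

end

theory Submission
  imports Defs
begin

primrec st :: "nat \<Rightarrow> (nat\<Rightarrow>complex) \<Rightarrow> nat \<Rightarrow> nat \<Rightarrow> complex" where
  "st n c 0 = (\<lambda>k. if Suc k = n then 1 else 0)"
| "st n c (Suc m) = (\<lambda>k. if Suc k < n then st n c m (Suc k) else -(\<Sum>j<n. c j * st n c m j))"

definition sq :: "nat \<Rightarrow> (nat\<Rightarrow>complex) \<Rightarrow> nat \<Rightarrow> complex" where
  "sq n c m = st n c m 0"

lemma st_shift: "k < n \<Longrightarrow> st n c m k = sq n c (m + k)"
proof (induction k arbitrary: m)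
  case 0 then show ?case by (simp add: sq_def)
next
  case (Suc k)
  have "st n c m (Suc k) = st n c (Suc m) k" using Suc.prems by simp
  also have "\<dots> = sq n c (Suc m + k)" using Suc.IH[of "Suc m"] Suc.prems by simp
  finally show ?case by simp
qed

lemma sq_init: "m < n \<Longrightarrow> sq n c m = (if Suc m = n then 1 else 0)"
  using st_shift[of m n c 0] by simp

lemma sq_rec: assumes "n > 0" shows "sq n c (m + n) = -(\<Sum>j<n. c j * sq n c (m + j))"
proof -
  have "sq n c (m + n) = st n c (Suc m) (n - 1)"
    using st_shift[of "n-1" n c "Suc m"] assms by simp
  also have "\<dots> = -(\<Sum>j<n. c j * st n c m j)" using assms by simp
  also have "\<dots> = -(\<Sum>j<n. c j * sq n c (m + j))" by (simp add: st_shift)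
  finally show ?thesis .
qed

definition KK :: "nat \<Rightarrow> (nat\<Rightarrow>complex) \<Rightarrow> real" where
  "KK n c = 1 + (\<Sum>j<n. norm (c j))"

lemma KK_ge1: "KK n c \<ge> 1" unfolding KK_def by (simp add: sum_nonneg)

lemma sq_bound: assumes "n > 0" shows "norm (sq n c m) \<le> KK n c ^ m"
proof (induction m rule: less_induct)
  case (less m)
  have K1: "KK n c \<ge> 1" by (rule KK_ge1)
  show ?case
  proof (cases "m < n")
    case True
    then show ?thesis using K1 by (simp add: sq_init)
  next
    case False
    then obtain p where p: "m = p + n" by (metis add.commute le_add_diff_inverse not_less)
    have "norm (sq n c m) = norm (\<Sum>j<n. c j * sq n c (p + j))" using sq_rec[OF assms] p by simp
    also have "\<dots> \<le> (\<Sum>j<n. norm (c j) * norm (sq n c (p + j)))"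
      by (rule order_trans[OF norm_sum]) (simp add: norm_mult)
    also have "\<dots> \<le> (\<Sum>j<n. norm (c j) * KK n c ^ (m - 1))"
    proof (rule sum_mono)
      fix j assume j: "j \<in> {..<n}"
      have "p + j < m" using j p by simp
      then have "norm (sq n c (p + j)) \<le> KK n c ^ (p + j)" using less by blast
      also have "\<dots> \<le> KK n c ^ (m - 1)" using K1 \<open>p + j < m\<close> by (intro power_increasing) auto
      finally show "norm (c j) * norm (sq n c (p + j)) \<le> norm (c j) * KK n c ^ (m - 1)"
        by (simp add: mult_left_mono)
    qed
    also have "\<dots> = (KK n c - 1) * KK n c ^ (m - 1)"
      by (simp add: KK_def sum_distrib_right)
    also have "\<dots> \<le> KK n c * KK n c ^ (m - 1)" using K1 by (simp add: mult_right_mono)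
    also have "\<dots> = KK n c ^ m" using False assms
      by (metis One_nat_def Suc_pred gr0I less_nat_zero_code not_less power_Suc)
    finally show ?thesis .
  qed
qed

lemma ps_summable:
  fixes b :: "nat \<Rightarrow> complex"
  assumes "\<And>m. norm (b m) \<le> B * K ^ m" "K \<ge> 0"
  shows "summable (\<lambda>m. b m / fact m * z ^ m)"
proof (rule summable_comparison_test')
  show "summable (\<lambda>m. B * (inverse (fact m) * (K * norm z) ^ m))"
    by (intro summable_mult summable_exp)
  fix m :: nat
  have "norm (b m / fact m * z ^ m) = norm (b m) * norm z ^ m / fact m"
    by (simp add: norm_mult norm_divide norm_power)
  also have "\<dots> \<le> (B * K ^ m) * norm z ^ m / fact m"
    by (intro divide_right_mono mult_right_mono assms) auto
  also have "\<dots> = B * (inverse (fact m) * (K * norm z) ^ m)"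
    by (simp add: power_mult_distrib field_simps)
  finally show "norm (b m / fact m * z ^ m) \<le> B * (inverse (fact m) * (K * norm z) ^ m)" .
qed

lemma ps_deriv:
  fixes b :: "nat \<Rightarrow> complex"
  assumes "\<And>z. summable (\<lambda>m. b m / fact m * z ^ m)"
  shows "((\<lambda>z. \<Sum>m. b m / fact m * z ^ m) has_field_derivative (\<Sum>m. b (Suc m) / fact m * z ^ m)) (at z)"
proof -
  have "diffs (\<lambda>m. b m / fact m) = (\<lambda>m. b (Suc m) / fact m)"
    by (auto simp: diffs_def fun_eq_iff field_simps simp del: of_nat_Suc)
  then show ?thesis using termdiffs_strong_converges_everywhere[of "\<lambda>m. b m / fact m" z] assms
    by simp
qed

definition Om :: "nat \<Rightarrow> (nat\<Rightarrow>complex) \<Rightarrow> nat \<Rightarrow> real \<Rightarrow> complex" where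
  "Om n c k x = (\<Sum>m. sq n c (m + k) / fact m * (complex_of_real x) ^ m)"

lemma Om_summable: assumes "n > 0" shows "summable (\<lambda>m. sq n c (m + k) / fact m * z ^ m)"
proof (rule ps_summable[where B = "KK n c ^ k" and K = "KK n c"])
  fix m show "norm (sq n c (m + k)) \<le> KK n c ^ k * KK n c ^ m"
    using sq_bound[OF assms, of c "m+k"] by (simp add: power_add mult.commute)
qed (use KK_ge1[of n c] in auto)

lemma Om_deriv: assumes "n > 0" shows "(Om n c k has_vector_derivative Om n c (Suc k) x) (at x)"
proof -
  have "((\<lambda>z. \<Sum>m. sq n c (m + k) / fact m * z ^ m) has_field_derivative
     (\<Sum>m. sq n c (Suc m + k) / fact m * z ^ m)) (at z)" for z
    using ps_deriv[of "\<lambda>m. sq n c (m + k)"] Om_summable[OF assms] by simp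
  from has_vector_derivative_real_field[OF this[of "of_real x"], where s=UNIV]
  show ?thesis unfolding Om_def by simp
qed

lemma Om_zero: "Om n c k 0 = sq n c k"
  unfolding Om_def using powser_zero[of "\<lambda>m. sq n c (m + k) / fact m"] by simp

lemma Om_rec: assumes "n > 0" shows "Om n c (k + n) x = -(\<Sum>j<n. c j * Om n c (k + j) x)"
proof -
  let ?z = "complex_of_real x"
  have "Om n c (k + n) x = (\<Sum>m. -(\<Sum>j<n. c j * (sq n c (m + (k + j)) / fact m * ?z ^ m)))"
    unfolding Om_def
    by (rule suminf_cong) (simp add: sq_rec[OF assms, of c "m + k" for m, unfolded add.assoc]
        sum_distrib_right sum_divide_distrib mult.assoc)
  also have "\<dots> = -(\<Sum>m. (\<Sum>j<n. c j * (sq n c (m + (k + j)) / fact m * ?z ^ m)))"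
    by (rule suminf_minus) (intro summable_sum summable_mult Om_summable[OF assms])
  also have "(\<Sum>m. (\<Sum>j<n. c j * (sq n c (m + (k + j)) / fact m * ?z ^ m))) =
      (\<Sum>j<n. (\<Sum>m. c j * (sq n c (m + (k + j)) / fact m * ?z ^ m)))"
    by (rule suminf_sum) (intro summable_mult Om_summable[OF assms])
  also have "\<dots> = (\<Sum>j<n. c j * Om n c (k + j) x)"
    unfolding Om_def by (intro sum.cong refl suminf_mult Om_summable[OF assms])
  finally show ?thesis .
qed

lemma uniq_local:
  fixes y :: "nat \<Rightarrow> real \<Rightarrow> complex"
  assumes n: "n > 0"
    and D: "\<And>k x. k < n \<Longrightarrow> (y k has_vector_derivative y (Suc k) x) (at x)"
    and R: "\<And>x. y n x = -(\<Sum>j<n. c j * y j x)"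
    and Z: "\<And>k. k < n \<Longrightarrow> y k a = 0"
    and h: "h = 1 / (2 * real n * KK n c)"
    and x: "\<bar>x - a\<bar> \<le> h" and k: "k < n"
  shows "y k x = 0"
proof -
  define K where "K = KK n c"
  have K1: "K \<ge> 1" unfolding K_def by (rule KK_ge1)
  have hpos: "h > 0" using h K1 n unfolding K_def by simp
  define I where "I = {a - h..a + h}"
  define \<phi> where "\<phi> t = (\<Sum>k<n. norm (y k t))" for t
  have ck: "continuous_on I (y k)" if "k < n" for k
    by (rule continuous_on_vector_derivative) (use D that has_vector_derivative_at_within in blast)
  have cont: "continuous_on I \<phi>" unfolding \<phi>_def
    by (intro continuous_on_sum continuous_on_norm ck) auto
  obtain t0 where t0: "t0 \<in> I" "\<And>t. t \<in> I \<Longrightarrow> \<phi> t \<le> \<phi> t0"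
    using continuous_attains_sup[OF _ _ cont] hpos unfolding I_def by auto
  define S where "S = \<phi> t0"
  have S0: "S \<ge> 0" unfolding S_def \<phi>_def by (simp add: sum_nonneg)
  have le_phi: "norm (y j t) \<le> \<phi> t" if "j < n" for j t
    unfolding \<phi>_def using that by (intro member_le_sum) auto
  have db: "norm (y (Suc j) t) \<le> K * S" if "j < n" "t \<in> I" for j t
  proof (cases "Suc j < n")
    case True
    then have "norm (y (Suc j) t) \<le> S" using le_phi t0 that unfolding S_def by (meson order_trans)
    also have "\<dots> \<le> K * S" using mult_right_mono[OF K1 S0] by simp
    finally show ?thesis .
  next
    case False
    then have jn: "Suc j = n" using that by simp
    have "norm (y (Suc j) t) = norm (\<Sum>i<n. c i * y i t)" using R jn by simp
    also have "\<dots> \<le> (\<Sum>i<n. norm (c i) * norm (y i t))"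
      by (rule order_trans[OF norm_sum]) (simp add: norm_mult)
    also have "\<dots> \<le> (\<Sum>i<n. norm (c i) * S)"
      using le_phi t0 that unfolding S_def
      by (intro sum_mono mult_left_mono) (auto intro: order_trans)
    also have "\<dots> = (K - 1) * S" unfolding K_def KK_def by (simp add: sum_distrib_right)
    also have "\<dots> \<le> K * S" using S0 by (simp add: mult_right_mono)
    finally show ?thesis .
  qed
  have yb: "norm (y j t) \<le> K * S * h" if "j < n" "t \<in> I" for j t
  proof -
    have "norm (y j t - y j a) \<le> K * S * norm (t - a)"
    proof (rule differentiable_bound[of I "y j" "\<lambda>t d. d *\<^sub>R y (Suc j) t"])
      show "convex I" unfolding I_def by simp
      show "(y j has_derivative (\<lambda>d. d *\<^sub>R y (Suc j) u)) (at u within I)" if "u \<in> I" for u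
        using D[OF \<open>j < n\<close>, of u] unfolding has_vector_derivative_def
        by (rule has_derivative_at_withinI)
      show "onorm (\<lambda>d. d *\<^sub>R y (Suc j) u) \<le> K * S" if "u \<in> I" for u
        using db[OF \<open>j < n\<close> that] by (intro onorm_le) (simp add: mult.commute mult_left_mono)
      show "t \<in> I" by fact
      show "a \<in> I" unfolding I_def using hpos by simp
    qed
    also have "\<dots> \<le> K * S * h" using \<open>t \<in> I\<close> K1 S0 unfolding I_def
      by (intro mult_left_mono) auto
    finally show ?thesis using Z[OF \<open>j < n\<close>] by simp
  qed
  have phib: "\<phi> t \<le> S / 2" if "t \<in> I" for t
  proof -
    have "\<phi> t \<le> (\<Sum>j<n. K * S * h)" unfolding \<phi>_def using yb that by (intro sum_mono) auto
    also have "\<dots> = S / 2" using h K1 n unfolding K_def by (simp add: field_simps)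
    finally show ?thesis .
  qed
  have "S \<le> S / 2" using phib[OF t0(1)] unfolding S_def .
  then have "S = 0" using S0 by simp
  have xI: "x \<in> I" using x unfolding I_def by auto
  have "norm (y k x) \<le> 0" using le_phi[OF k, of x] phib[OF xI] \<open>S = 0\<close> by linarith
  then show ?thesis by simp
qed

lemma uniq:
  fixes y :: "nat \<Rightarrow> real \<Rightarrow> complex"
  assumes n: "n > 0"
    and D: "\<And>k x. k < n \<Longrightarrow> (y k has_vector_derivative y (Suc k) x) (at x)"
    and R: "\<And>x. y n x = -(\<Sum>j<n. c j * y j x)"
    and Z: "\<And>k. k < n \<Longrightarrow> y k 0 = 0"
    and k: "k < n"
  shows "y k x = 0"
proof -
  define h where "h = 1 / (2 * real n * KK n c)"
  have hpos: "h > 0" using KK_ge1[of n c] n unfolding h_def by simp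
  have claim: "\<forall>x. \<bar>x\<bar> \<le> real m * h \<longrightarrow> (\<forall>k<n. y k x = 0)" for m
  proof (induction m)
    case 0 then show ?case using Z by simp
  next
    case (Suc m)
    show ?case
    proof (intro allI impI)
      fix x k assume x: "\<bar>x\<bar> \<le> real (Suc m) * h" and k: "k < n"
      define a where "a = x * real m / real (Suc m)"
      have "\<bar>a\<bar> = \<bar>x\<bar> * real m / real (Suc m)" unfolding a_def by (simp add: abs_mult)
      also have "\<dots> \<le> real (Suc m) * h * real m / real (Suc m)"
        using x by (intro divide_right_mono mult_right_mono) auto
      also have "\<dots> = real m * h" by simp
      finally have a: "\<bar>a\<bar> \<le> real m * h" .
      have "x - a = x / real (Suc m)" unfolding a_def by (simp add: field_simps)
      then have "\<bar>x - a\<bar> = \<bar>x\<bar> / real (Suc m)" by simp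
      also have "\<dots> \<le> h" using x by (simp add: field_simps)
      finally have xa: "\<bar>x - a\<bar> \<le> h" .
      show "y k x = 0"
        by (rule uniq_local[OF n D R _ h_def xa k]) (use Suc.IH a in auto)
    qed
  qed
  obtain m where "\<bar>x\<bar> / h \<le> real m" using real_arch_simple by blast
  then have "\<bar>x\<bar> \<le> real m * h" using hpos by (simp add: field_simps)
  then show ?thesis using claim k by blast
qed

lemma hderiv_0[simp]: "hderiv 0 f = f" by (simp add: hderiv_def)
lemma hderiv_Suc: "hderiv (Suc k) f = (\<lambda>x. vector_derivative (hderiv k f) (at x))"
  by (simp add: hderiv_def)

lemma Om_hderiv: assumes "n > 0" shows "hderiv k (Om n c 0) = Om n c k"
proof (induction k)
  case 0 then show ?case by simp
next
  case (Suc k)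
  show ?case unfolding hderiv_Suc Suc.IH
    using vector_derivative_at[OF Om_deriv[OF assms]] by (simp add: fun_eq_iff)
qed

lemma sum_atMost_split: fixes n :: nat shows "(\<Sum>k\<le>n. f k) = f n + (\<Sum>k<n. f k)"
proof -
  have "{..n} = insert n {..<n}" by auto
  then show ?thesis by simp
qed

lemma sol_rel:
  assumes "c n = 1" "Dop n c w = (\<lambda>_. 0)"
  shows "hderiv n w x = -(\<Sum>j<n. c j * hderiv j w x)"
proof -
  have "(\<Sum>k\<le>n. c k * hderiv k w x) = 0" using fun_cong[OF assms(2), of x] unfolding Dop_def by simp
  then show ?thesis using assms(1) by (simp add: sum_atMost_split eq_neg_iff_add_eq_0)
qed

lemma char_sol_eq: assumes n: "n > 0" and c: "c n = 1" shows "char_sol n c = Om n c 0"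
  unfolding char_sol_def
proof (rule the_equality)
  show "Om n c 0 \<in> Cn n UNIV \<and> Dop n c (Om n c 0) = (\<lambda>_. 0) \<and>
    (\<forall>k<n. hderiv k (Om n c 0) 0 = (if k = n - 1 then 1 else 0))"
  proof (intro conjI allI impI)
    have "continuous_on UNIV (Om n c n)"
      by (rule continuous_on_vector_derivative) (use Om_deriv[OF n] has_vector_derivative_at_within in blast)
    then show "Om n c 0 \<in> Cn n UNIV" using Om_deriv[OF n] by (simp add: Cn_def Om_hderiv[OF n])
    have e4: "Om n c n x = -(\<Sum>j<n. c j * Om n c j x)" for x using Om_rec[OF n, of c 0 x] by simp
    show "Dop n c (Om n c 0) = (\<lambda>_. 0)" unfolding Dop_def Om_hderiv[OF n] fun_eq_iff sum_atMost_split c e4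
      by simp
    fix k assume "k < n"
    then show "hderiv k (Om n c 0) 0 = (if k = n - 1 then 1 else 0)"
      unfolding Om_hderiv[OF n] Om_zero using sq_init[of k n c] by auto
  qed
next
  fix w assume w: "w \<in> Cn n UNIV \<and> Dop n c w = (\<lambda>_. 0) \<and>
    (\<forall>k<n. hderiv k w 0 = (if k = n - 1 then 1 else 0))"
  define y where "y k x = hderiv k w x - Om n c k x" for k x
  have "y 0 x = 0" for x
  proof (rule uniq[OF n, of y c])
    fix k x assume k: "k < n"
    show "(y k has_vector_derivative y (Suc k) x) (at x)" unfolding y_def
      using w k Om_deriv[OF n] unfolding Cn_def by (intro has_vector_derivative_diff) auto
  next
    fix x
    have e3: "hderiv n w x = -(\<Sum>j<n. c j * hderiv j w x)"
      by (rule sol_rel[of c n w x, OF c]) (use w in blast)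
    have e4: "Om n c n x = -(\<Sum>j<n. c j * Om n c j x)" using Om_rec[OF n, of c 0 x] by simp
    show "y n x = -(\<Sum>j<n. c j * y j x)" unfolding y_def e3 e4
      by (simp add: right_diff_distrib sum_subtractf)
  next
    fix k assume k: "k < n"
    then show "y k 0 = 0" unfolding y_def using w Om_zero sq_init[of k n c] by auto
  qed (use n in auto)
  then show "w = Om n c 0" unfolding y_def by (auto simp: fun_eq_iff)
qed

lemma sum_split_lt: fixes a b :: nat shows "(\<Sum>l<a+b. g l) = (\<Sum>l<a. g l) + (\<Sum>i<b. g (a+i))"
  by (induction b) (auto simp: add.assoc)

lemma Tlemma:
  assumes n: "n > 0" and c: "c n = 1" and j: "j < n" and k: "k < n"
  shows "(\<Sum>i<n-j. c (i+j+1) * sq n c (k+i)) = (if j = k then 1 else 0)"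
proof (cases "j < k")
  case True
  define p where "p = k - j - 1"
  have "(\<Sum>l<Suc j + (n - j). c l * sq n c (p + l)) = 0"
  proof -
    have "Suc j + (n - j) = Suc n" using j by simp
    then show ?thesis using sq_rec[OF n, of c p] c by (simp add: sum.lessThan_Suc add.commute)
  qed
  moreover have "(\<Sum>l<Suc j. c l * sq n c (p + l)) = 0"
    using True k unfolding p_def by (intro sum.neutral) (auto simp: sq_init)
  ultimately have h0: "(\<Sum>i<n-j. c (Suc j + i) * sq n c (p + (Suc j + i))) = 0"
    unfolding sum_split_lt by simp
  have "(\<Sum>i<n-j. c (i+j+1) * sq n c (k+i)) = (\<Sum>i<n-j. c (Suc j + i) * sq n c (p + (Suc j + i)))"
  proof (intro sum.cong refl)
    fix i
    have e1: "p + (Suc j + i) = k + i" and e2: "Suc j + i = i + j + 1" using True unfolding p_def by auto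
    show "c (i+j+1) * sq n c (k+i) = c (Suc j + i) * sq n c (p + (Suc j + i))" unfolding e1 unfolding e2 ..
  qed
  then show ?thesis using True h0 by simp
next
  case False
  have "(\<Sum>i<n-j. c (i+j+1) * sq n c (k+i)) = (\<Sum>i<n-j. if i = n - 1 - k then c (i+j+1) else 0)"
    using False j k by (intro sum.cong refl) (auto simp: sq_init)
  also have "\<dots> = (if n - 1 - k < n - j then c (n - 1 - k + j + 1) else 0)"
    by (simp add: sum.delta)
  also have "\<dots> = (if j = k then 1 else 0)" using False j k c by auto
  finally show ?thesis .
qed

lemma tri_swap: fixes n :: nat shows "(\<Sum>j<n. \<Sum>i<n-j. f i j) = (\<Sum>i<n. \<Sum>j<n-i. (f i j :: complex))"
proof -
  have e1: "(\<Sum>j<n. \<Sum>i<n-j. f i j) = (\<Sum>j<n. \<Sum>i<n. if i + j < n then f i j else 0)"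
  proof (rule sum.cong[OF refl])
    fix j
    have "{..<n-j} = {i \<in> {..<n}. i + j < n}" by auto
    then show "(\<Sum>i<n-j. f i j) = (\<Sum>i<n. if i + j < n then f i j else 0)"
      by (simp only: sum.inter_filter[OF finite_lessThan])
  qed
  have e2: "(\<Sum>i<n. \<Sum>j<n-i. f i j) = (\<Sum>i<n. \<Sum>j<n. if i + j < n then f i j else 0)"
  proof (rule sum.cong[OF refl])
    fix i
    have "{..<n-i} = {j \<in> {..<n}. i + j < n}" by auto
    then show "(\<Sum>j<n-i. f i j) = (\<Sum>j<n. if i + j < n then f i j else 0)"
      by (simp only: sum.inter_filter[OF finite_lessThan])
  qed
  show ?thesis unfolding e1 e2 by (rule sum.swap)
qed


theorem mainTheorem1:
  fixes n :: nat and c :: "nat \<Rightarrow> complex" and w :: "real \<Rightarrow> complex" and u v :: real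
  assumes "c n = 1"
    and "w \<in> Cn n UNIV"
    and "Dop n c w = (\<lambda>_. 0)"
  shows "w (u + v) = (\<Sum>j<n. \<Sum>i<n - j. c (i + j + 1) * hderiv i (char_sol n c) u * hderiv j w v)"
proof (cases "n = 0")
  case True
  have "c 0 * w x = 0" for x
  proof -
    have "Dop n c w x = 0" using assms(3) by simp
    then show ?thesis using True by (simp add: Dop_def)
  qed
  then show ?thesis using True assms(1) by simp
next
  case False
  then have n: "n > 0" by simp
  note c = assms(1)
  define d where "d j = hderiv j w v" for j
  define \<alpha> where "\<alpha> i = (\<Sum>j<n-i. c (i+j+1) * d j)" for i
  define y where "y k x = hderiv k w (x + v) - (\<Sum>i<n. \<alpha> i * Om n c (k+i) x)" for k x
  have D: "(y k has_vector_derivative y (Suc k) x) (at x)" if k: "k < n" for k x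
  proof -
    have d1: "((\<lambda>x. x + v) has_vector_derivative 1) (at x)"
      by (auto intro!: derivative_eq_intros)
    have d2: "(hderiv k w has_vector_derivative hderiv (Suc k) w (x + v)) (at (x + v))"
      using assms(2) k by (simp add: Cn_def)
    have "((hderiv k w \<circ> (\<lambda>x. x + v)) has_vector_derivative (1 *\<^sub>R hderiv (Suc k) w (x + v))) (at x)"
      using vector_diff_chain_at[OF d1, of "hderiv k w"] d2 by simp
    then have "((\<lambda>x. hderiv k w (x + v)) has_vector_derivative hderiv (Suc k) w (x + v)) (at x)"
      by (simp add: o_def)
    moreover have "((\<lambda>x. \<Sum>i<n. \<alpha> i * Om n c (k+i) x) has_vector_derivative
        (\<Sum>i<n. \<alpha> i * Om n c (Suc k+i) x)) (at x)"
      by (intro has_vector_derivative_sum has_vector_derivative_mult_right)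
        (use Om_deriv[OF n] in simp)
    ultimately show ?thesis unfolding y_def by (rule has_vector_derivative_diff)
  qed
  have R: "y n x = -(\<Sum>j<n. c j * y j x)" for x
  proof -
    have e: "Om n c (n+i) x = -(\<Sum>j<n. c j * Om n c (i+j) x)" for i
      by (metis Om_rec[OF n] add.commute)
    have "(\<Sum>i<n. \<alpha> i * Om n c (n+i) x) = (\<Sum>i<n. \<alpha> i * -(\<Sum>j<n. c j * Om n c (i+j) x))"
      by (simp only: e)
    also have "\<dots> = -(\<Sum>i<n. \<Sum>j<n. c j * (\<alpha> i * Om n c (j+i) x))"
      by (simp add: sum_distrib_left sum_negf mult.left_commute add.commute)
    also have "\<dots> = -(\<Sum>j<n. \<Sum>i<n. c j * (\<alpha> i * Om n c (j+i) x))"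
      by (subst sum.swap) (rule refl)
    also have "\<dots> = -(\<Sum>j<n. c j * (\<Sum>i<n. \<alpha> i * Om n c (j+i) x))"
      by (simp add: sum_distrib_left)
    finally have e2: "(\<Sum>i<n. \<alpha> i * Om n c (n+i) x) = -(\<Sum>j<n. c j * (\<Sum>i<n. \<alpha> i * Om n c (j+i) x))" .
    have e3: "hderiv n w (x + v) = -(\<Sum>j<n. c j * hderiv j w (x + v))"
      by (rule sol_rel[of c n w "x + v", OF c assms(3)])
    show ?thesis unfolding y_def e2 e3
      by (simp add: right_diff_distrib sum_subtractf)
  qed
  have Z: "y k 0 = 0" if k: "k < n" for k
  proof -
    have "(\<Sum>i<n. \<alpha> i * Om n c (k+i) 0) = (\<Sum>i<n. \<Sum>j<n-i. c (i+j+1) * sq n c (k+i) * d j)"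
      unfolding \<alpha>_def Om_zero sum_distrib_right
      by (intro sum.cong refl) (simp add: ac_simps)
    also have "\<dots> = (\<Sum>j<n. \<Sum>i<n-j. c (i+j+1) * sq n c (k+i) * d j)"
      by (rule tri_swap[symmetric])
    also have "\<dots> = (\<Sum>j<n. (if j = k then 1 else 0) * d j)"
    proof (intro sum.cong refl)
      fix j assume "j \<in> {..<n}"
      then have "j < n" by simp
      show "(\<Sum>i<n-j. c (i+j+1) * sq n c (k+i) * d j) = (if j = k then 1 else 0) * d j"
        unfolding sum_distrib_right[symmetric] Tlemma[of n c j k, OF n c \<open>j < n\<close> k] ..
    qed
    also have "\<dots> = (\<Sum>j<n. if j = k then d j else 0)" by (intro sum.cong refl) simp
    also have "\<dots> = d k" using k by (simp add: sum.delta)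
    finally show ?thesis unfolding y_def d_def by simp
  qed
  have "y 0 u = 0" by (rule uniq[OF n D R Z n])
  then have "w (u + v) = (\<Sum>i<n. \<alpha> i * Om n c i u)" unfolding y_def by simp
  also have "\<dots> = (\<Sum>i<n. \<Sum>j<n-i. c (i + j + 1) * Om n c i u * d j)"
    unfolding \<alpha>_def sum_distrib_right by (intro sum.cong refl) (simp add: ac_simps)
  also have "\<dots> = (\<Sum>j<n. \<Sum>i<n-j. c (i + j + 1) * Om n c i u * d j)"
    by (rule tri_swap[symmetric])
  finally show ?thesis unfolding d_def char_sol_eq[of n c, OF n c] Om_hderiv[OF n] .
qed
end
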